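(* Let $k\ge1$ and let $\mathcal{C}$ be a set of admissible $(k+1)$-words. Let $W_k\langle\mathcal{C}\rangle$ be the smallest $T_k$-invariant subspace of $V_k$ containing $\psi_k(V_1)$ and the vectors $[\eta w]$ for $w\in\mathcal{C}$. Then $T_k\langle\mathcal{C}\rangle$ maps $W_k\langle\mathcal{C}\rangle$ into itself, and the induced map on $V_k/W_k\langle\mathcal{C}\rangle$ is nilpotent.
   Context: Let $\mathcal{A}$ be a finite alphabet of $r$ symbols and $T=(T_{x,y})$ an $r\times r$ matrix with entries in $\{0,1\}$. An admissible $k$-word is a string $a_1\cdots a_k$ of symbols with $T_{a_{i+1},a_i}=1$ for $1\le i\le k-1$. $V_k$ is the complex vector space with basis $\{[w]\}$ indexed by admissible $k$-words. $\psi_k:V_1\to V_k$ is linear with $\psi_k([a])$ the sum of $[w]$ over all admissible $k$-words beginning with $a$. $T_k:V_k\to V_k$ is linear with $T_k([a_1\cdots a_k])=\sum[a_2\cdots a_kx]$, summed over symbols $x$ with $a_2\cdots a_kx$ admissible. For a word $w$, $\beta w$ and $\eta w$ denote the words obtained by deleting the last and the first symbol, respectively. For an admissible $(k+1)$-word $w$, $E_w:V_k\to V_k$ is the linear map with $E_w[\beta w]=[\eta w]$ and $E_w[u]=0$ for every other admissible $k$-word $u$. For a set $\mathcal{C}$ of admissible $(k+1)$-words, $T_k\langle\mathcal{C}\rangle=T_k-\sum_{w\in\mathcal{C}}E_w$. *)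

theory Defs
  imports Complex_Main
begin

text \<open>Transition matrix T: T x y = True iff T_{x,y} = 1.
  Vectors of V_k are coefficient functions 'a list => complex supported on admissible k-words;
  the basis vector [w] is bvec w.\<close>

definition adm :: "('a \<Rightarrow> 'a \<Rightarrow> bool) \<Rightarrow> nat \<Rightarrow> 'a list \<Rightarrow> bool" where
  "adm T k w \<longleftrightarrow> length w = k \<and> (\<forall>i. Suc i < k \<longrightarrow> T (w ! Suc i) (w ! i))"

definition words :: "('a \<Rightarrow> 'a \<Rightarrow> bool) \<Rightarrow> nat \<Rightarrow> 'a list set" where
  "words T k = {w. adm T k w}"

definition Vsp :: "('a \<Rightarrow> 'a \<Rightarrow> bool) \<Rightarrow> nat \<Rightarrow> ('a list \<Rightarrow> complex) set" where
  "Vsp T k = {v. \<forall>u. \<not> adm T k u \<longrightarrow> v u = 0}"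

definition bvec :: "'a list \<Rightarrow> ('a list \<Rightarrow> complex)" where
  "bvec w = (\<lambda>u. if u = w then 1 else 0)"

definition Tk :: "('a::finite \<Rightarrow> 'a \<Rightarrow> bool) \<Rightarrow> nat \<Rightarrow> ('a list \<Rightarrow> complex) \<Rightarrow> ('a list \<Rightarrow> complex)" where
  "Tk T k v = (\<lambda>u. \<Sum>w\<in>words T k. v w * (\<Sum>x\<in>{x. adm T k (tl w @ [x])}. bvec (tl w @ [x]) u))"

definition psi :: "('a::finite \<Rightarrow> 'a \<Rightarrow> bool) \<Rightarrow> nat \<Rightarrow> ('a list \<Rightarrow> complex) \<Rightarrow> ('a list \<Rightarrow> complex)" where
  "psi T k v = (\<lambda>u. \<Sum>a\<in>UNIV. v [a] * (\<Sum>w\<in>{w. adm T k w \<and> hd w = a}. bvec w u))"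

text \<open>E_w for an admissible (k+1)-word w: [beta w] maps to [eta w], other basis vectors to 0.
  beta w = butlast w, eta w = tl w.\<close>
definition Ew :: "'a list \<Rightarrow> ('a list \<Rightarrow> complex) \<Rightarrow> ('a list \<Rightarrow> complex)" where
  "Ew w v = (\<lambda>u. v (butlast w) * bvec (tl w) u)"

definition TC :: "('a::finite \<Rightarrow> 'a \<Rightarrow> bool) \<Rightarrow> nat \<Rightarrow> 'a list set \<Rightarrow> ('a list \<Rightarrow> complex) \<Rightarrow> ('a list \<Rightarrow> complex)" where
  "TC T k C v = (\<lambda>u. Tk T k v u - (\<Sum>w\<in>C. Ew w v u))"

definition csubspace :: "('a list \<Rightarrow> complex) set \<Rightarrow> bool" where
  "csubspace S \<longleftrightarrow> (\<lambda>u. 0) \<in> S \<and> (\<forall>x\<in>S. \<forall>y\<in>S. (\<lambda>u. x u + y u) \<in> S)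
     \<and> (\<forall>c. \<forall>x\<in>S. (\<lambda>u. c * x u) \<in> S)"

definition WC :: "('a::finite \<Rightarrow> 'a \<Rightarrow> bool) \<Rightarrow> nat \<Rightarrow> 'a list set \<Rightarrow> ('a list \<Rightarrow> complex) set" where
  "WC T k C = \<Inter>{S. S \<subseteq> Vsp T k \<and> csubspace S \<and> (\<forall>v\<in>S. Tk T k v \<in> S)
       \<and> (\<forall>v\<in>Vsp T 1. psi T k v \<in> S) \<and> (\<forall>w\<in>C. bvec (tl w) \<in> S)}"

end

theory Submission
  imports Defs
begin

lemma adm_Cons: "adm T (Suc n) (a # v) \<longleftrightarrow> adm T n v \<and> (v = [] \<or> T (hd v) a)"
proof
  assume h: "adm T (Suc n) (a # v)"
  hence l: "length v = n" by (simp add: adm_def)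
  have "\<forall>i. Suc i < n \<longrightarrow> T (v ! Suc i) (v ! i)"
  proof (intro allI impI)
    fix i assume "Suc i < n"
    with h have "T ((a#v) ! Suc (Suc i)) ((a#v) ! Suc i)" unfolding adm_def by blast
    thus "T (v ! Suc i) (v ! i)" by simp
  qed
  moreover have "v = [] \<or> T (hd v) a"
  proof (cases v)
    case (Cons b vs)
    with h l have "T ((a#v) ! Suc 0) ((a#v) ! 0)" unfolding adm_def by auto
    thus ?thesis using Cons by simp
  qed simp
  ultimately show "adm T n v \<and> (v = [] \<or> T (hd v) a)" using l by (simp add: adm_def)
next
  assume h: "adm T n v \<and> (v = [] \<or> T (hd v) a)"
  show "adm T (Suc n) (a # v)" unfolding adm_def
  proof (intro conjI allI impI)
    show "length (a # v) = Suc n" using h by (simp add: adm_def)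
    fix i assume i: "Suc i < Suc n"
    show "T ((a # v) ! Suc i) ((a # v) ! i)"
    proof (cases i)
      case 0
      then show ?thesis using h i by (cases v) (auto simp: adm_def)
    next
      case (Suc j)
      then show ?thesis using h i by (auto simp: adm_def)
    qed
  qed
qed

lemma adm_butlast: "adm T k u \<Longrightarrow> adm T (k - 1) (butlast u)"
  unfolding adm_def by (auto simp: nth_butlast)

lemma adm_length: "adm T k u \<Longrightarrow> length u = k"
  by (simp add: adm_def)

lemma finite_words: "finite (words T (n::nat) :: ('a::finite) list set)"
proof -
  have "words T n \<subseteq> {xs. set xs \<subseteq> UNIV \<and> length xs = n}" by (auto simp: words_def adm_def)
  thus ?thesis using finite_lists_length_eq[of "UNIV :: 'a set" n] finite_subset by auto
qed

lemma Tk_eq1: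
  assumes "k \<ge> 1"
  shows "Tk T k f u = (if adm T k u then (\<Sum>w\<in>{w\<in>words T k. tl w = butlast u}. f w) else 0)"
proof -
  have inner: "(\<Sum>x\<in>{x. adm T k (tl w @ [x])}. bvec (tl w @ [x]) u) =
      (if adm T k u \<and> tl w = butlast u then 1 else 0)" for w
  proof (cases "u = []")
    case True
    then show ?thesis using assms by (auto simp: bvec_def adm_def)
  next
    case False
    have eq: "(u = tl w @ [x]) \<longleftrightarrow> (tl w = butlast u \<and> x = last u)" for x
      using False by (metis append_butlast_last_id butlast_snoc last_snoc)
    have "(\<Sum>x\<in>{x. adm T k (tl w @ [x])}. bvec (tl w @ [x]) u)
        = (\<Sum>x\<in>{x. adm T k (tl w @ [x])}. if x = last u then (if tl w = butlast u then 1 else 0) else 0)"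
      by (rule sum.cong) (auto simp: bvec_def eq)
    also have "\<dots> = (if last u \<in> {x. adm T k (tl w @ [x])} then (if tl w = butlast u then 1 else 0) else 0)"
      by (rule sum.delta) simp
    also have "\<dots> = (if adm T k u \<and> tl w = butlast u then 1 else 0)"
      using False by (auto simp: append_butlast_last_id)
    finally show ?thesis .
  qed
  have "Tk T k f u = (\<Sum>w\<in>words T k. if adm T k u \<and> tl w = butlast u then f w else 0)"
    unfolding Tk_def by (rule sum.cong) (auto simp: inner)
  also have "\<dots> = (if adm T k u then (\<Sum>w\<in>{w\<in>words T k. tl w = butlast u}. f w) else 0)"
    by (auto simp: sum.inter_filter[symmetric] finite_words)
  finally show ?thesis .
qed

lemma Tk_eq:
  assumes "k \<ge> 1" "adm T k u"
  shows "Tk T k f u = (\<Sum>a\<in>{a. adm T k (a # butlast u)}. f (a # butlast u))"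
proof -
  have "{w\<in>words T k. tl w = butlast u} = (\<lambda>a. a # butlast u) ` {a. adm T k (a # butlast u)}"
  proof (intro set_eqI iffI)
    fix w assume "w \<in> {w\<in>words T k. tl w = butlast u}"
    hence w: "adm T k w" "tl w = butlast u" by (auto simp: words_def)
    hence "w \<noteq> []" using assms adm_length by fastforce
    hence "w = hd w # butlast u" using w by (metis list.collapse)
    thus "w \<in> (\<lambda>a. a # butlast u) ` {a. adm T k (a # butlast u)}" using w by force
  qed (auto simp: words_def)
  moreover have "inj_on (\<lambda>a. a # butlast u) A" for A by (auto simp: inj_on_def)
  ultimately show ?thesis using assms by (simp add: Tk_eq1 sum.reindex)
qed

lemma Tk_Vsp: "k \<ge> 1 \<Longrightarrow> Tk T k f \<in> Vsp T k"
  by (auto simp: Vsp_def Tk_eq1)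

lemma Tk_diff: "Tk T k (\<lambda>u. x u - y u) = (\<lambda>u. Tk T k x u - Tk T k y u)"
  unfolding Tk_def by (auto simp: sum_subtractf[symmetric] left_diff_distrib intro!: sum.cong)

definition Qm :: "('a \<Rightarrow> 'a \<Rightarrow> bool) \<Rightarrow> nat \<Rightarrow> nat \<Rightarrow> ('a list \<Rightarrow> complex) \<Rightarrow> bool" where
  "Qm T k m f \<longleftrightarrow> (\<forall>u u'. adm T k u \<longrightarrow> adm T k u' \<longrightarrow> take m u = take m u' \<longrightarrow> hd u = hd u' \<longrightarrow> f u = f u')"

lemma Qm_k: "Qm T k k f"
  by (auto simp: Qm_def adm_def)

lemma adm_cons_butlast:
  assumes "k \<ge> 1" "adm T k u"
  shows "adm T k (a # butlast u) \<longleftrightarrow> (k = 1 \<or> T (hd u) a)"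
proof -
  obtain n where n: "k = Suc n" using assms(1) by (cases k) auto
  have l: "length u = k" using assms adm_length by blast
  have "adm T k (a # butlast u) \<longleftrightarrow> (butlast u = [] \<or> T (hd (butlast u)) a)"
    using n adm_Cons[of T n a "butlast u"] adm_butlast[OF assms(2)] by simp
  also have "\<dots> \<longleftrightarrow> (k = 1 \<or> T (hd u) a)"
    using l n by (cases u) auto
  finally show ?thesis .
qed

lemma Qm_step:
  assumes "k \<ge> 1" "Qm T k (Suc m) f"
  shows "Qm T k m (Tk T k f)"
  unfolding Qm_def
proof (intro allI impI)
  fix u u' assume u: "adm T k u" and u': "adm T k u'" and tk: "take m u = take m u'" and hd: "hd u = hd u'"
  have lu: "length u = k" "length u' = k" using u u' adm_length by auto
  show "Tk T k f u = Tk T k f u'"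
  proof (cases "m \<ge> k")
    case True
    then have "u = u'" using tk lu by simp
    thus ?thesis by simp
  next
    case False
    have S: "{a. adm T k (a # butlast u)} = {a. adm T k (a # butlast u')}"
      using adm_cons_butlast[OF assms(1) u] adm_cons_butlast[OF assms(1) u'] hd by simp
    have "f (a # butlast u) = f (a # butlast u')" if a: "adm T k (a # butlast u)" "adm T k (a # butlast u')" for a
    proof -
      have "take m (butlast u) = take m (butlast u')"
        using False tk lu by (simp add: take_butlast)
      hence "take (Suc m) (a # butlast u) = take (Suc m) (a # butlast u')" by simp
      moreover have "hd (a # butlast u) = hd (a # butlast u')" by simp
      ultimately show ?thesis using assms(2)[unfolded Qm_def, rule_format, OF a] by blast
    qed
    hence "(\<Sum>a\<in>{a. adm T k (a # butlast u)}. f (a # butlast u)) = (\<Sum>a\<in>{a. adm T k (a # butlast u')}. f (a # butlast u'))"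
      unfolding S[symmetric] by (intro sum.cong refl) (use S in auto)
    thus ?thesis by (simp only: Tk_eq[OF assms(1) u] Tk_eq[OF assms(1) u'])
  qed
qed

lemma Qm_pow:
  assumes "k \<ge> 1" "j \<le> k"
  shows "Qm T k (k - j) ((Tk T k ^^ j) f)"
  using assms(2)
proof (induction j)
  case 0
  then show ?case by (simp add: Qm_k)
next
  case (Suc j)
  then have "Qm T k (Suc (k - Suc j)) ((Tk T k ^^ j) f)" by (simp add: Suc_diff_Suc)
  then have "Qm T k (k - Suc j) (Tk T k ((Tk T k ^^ j) f))" by (rule Qm_step[OF assms(1)])
  then show ?case by simp
qed

lemma Q0_psi:
  assumes "Qm T k 0 f" "f \<in> Vsp T k" "k \<ge> 1"
  shows "\<exists>g\<in>Vsp T 1. f = psi T k g"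
proof -
  define g where "g = (\<lambda>l. if length l = 1 then f (SOME u. adm T k u \<and> hd u = hd l) else 0)"
  have gV: "g \<in> Vsp T 1" by (auto simp: g_def Vsp_def adm_def)
  have inner: "(\<Sum>w\<in>{w. adm T k w \<and> hd w = a}. bvec w u) = (if adm T k u \<and> hd u = a then 1 else 0)" for a u
  proof -
    have fin: "finite {w. adm T k w \<and> hd w = a}"
      using finite_words[of T k] by (rule finite_subset[rotated]) (auto simp: words_def)
    have "(\<Sum>w\<in>{w. adm T k w \<and> hd w = a}. bvec w u) = (\<Sum>w\<in>{w. adm T k w \<and> hd w = a}. if u = w then 1 else 0)"
      by (simp add: bvec_def)
    also have "\<dots> = (if u \<in> {w. adm T k w \<and> hd w = a} then 1 else 0)"
      using fin by (rule sum.delta')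
    finally show ?thesis by simp
  qed
  have "f u = psi T k g u" for u
  proof -
    have "psi T k g u = (\<Sum>a\<in>UNIV. if a = hd u then (if adm T k u then g [a] else 0) else 0)"
      unfolding psi_def inner by (intro sum.cong refl) simp
    also have "\<dots> = (if adm T k u then g [hd u] else 0)" by (subst sum.delta) simp_all
    also have "\<dots> = f u"
    proof (cases "adm T k u")
      case True
      define s where "s = (SOME u'. adm T k u' \<and> hd u' = hd u)"
      have ex: "\<exists>u'. adm T k u' \<and> hd u' = hd u" using True by blast
      have s: "adm T k s \<and> hd s = hd u"
        unfolding s_def by (rule someI_ex[OF ex])
      have "g [hd u] = f s" by (simp add: g_def s_def)
      also have "f s = f u"
        using assms(1)[unfolded Qm_def, rule_format, of s u] s True by simp
      finally show ?thesis using True by simp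
    next
      case False
      then show ?thesis using assms(2) by (simp add: Vsp_def)
    qed
    finally show ?thesis by simp
  qed
  thus ?thesis using gV by blast
qed

lemma W_Tk: "v \<in> WC T k C \<Longrightarrow> Tk T k v \<in> WC T k C"
  unfolding WC_def by blast
lemma W_psi: "v \<in> Vsp T 1 \<Longrightarrow> psi T k v \<in> WC T k C"
  unfolding WC_def by blast
lemma W_bvec: "w \<in> C \<Longrightarrow> bvec (tl w) \<in> WC T k C"
  unfolding WC_def by blast
lemma W_zero: "(\<lambda>u. 0) \<in> WC T k C"
  unfolding WC_def csubspace_def by blast
lemma W_add: "x \<in> WC T k C \<Longrightarrow> y \<in> WC T k C \<Longrightarrow> (\<lambda>u. x u + y u) \<in> WC T k C"
  unfolding WC_def csubspace_def by blast
lemma W_smult: "x \<in> WC T k C \<Longrightarrow> (\<lambda>u. c * x u) \<in> WC T k C"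
  unfolding WC_def csubspace_def by blast

lemma W_sum: "finite F \<Longrightarrow> (\<And>w. w \<in> F \<Longrightarrow> g w \<in> WC T k C) \<Longrightarrow> (\<lambda>u. \<Sum>w\<in>F. g w u) \<in> WC T k C"
proof (induction F rule: finite_induct)
  case empty
  then show ?case using W_zero by simp
next
  case (insert x F)
  then show ?case using W_add[of "g x" T k C "\<lambda>u. \<Sum>w\<in>F. g w u"] by simp
qed

lemma W_E:
  assumes "finite C"
  shows "(\<lambda>u. \<Sum>w\<in>C. Ew w x u) \<in> WC T k C"
  using assms
proof (rule W_sum)
  fix w assume "w \<in> C"
  then show "Ew w x \<in> WC T k C" unfolding Ew_def using W_smult[OF W_bvec] by blast
qed

theorem lemma1p4:
  fixes T :: "'a::finite \<Rightarrow> 'a \<Rightarrow> bool" and k :: nat and C :: "'a list set"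
  assumes "k \<ge> 1"
    and "C \<subseteq> words T (Suc k)"
  shows "(\<forall>v\<in>WC T k C. TC T k C v \<in> WC T k C)
    \<and> (\<exists>N. \<forall>v\<in>Vsp T k. (TC T k C ^^ N) v \<in> WC T k C)"
proof -
  have finC: "finite C" using assms(2) finite_words finite_subset by blast
  have TCeq: "TC T k C v = (\<lambda>u. Tk T k v u + (-1) * (\<Sum>w\<in>C. Ew w v u))" for v
    unfolding TC_def by auto
  have P1: "\<forall>v\<in>WC T k C. TC T k C v \<in> WC T k C"
  proof
    fix v assume v: "v \<in> WC T k C"
    have "TC T k C v = (\<lambda>u. Tk T k v u + (-1) * (\<Sum>w\<in>C. Ew w v u))" by (rule TCeq)
    also have "\<dots> \<in> WC T k C" by (rule W_add[OF W_Tk[OF v] W_smult[OF W_E[OF finC]]])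
    finally show "TC T k C v \<in> WC T k C" .
  qed
  have D: "(\<lambda>u. (TC T k C ^^ n) v u - (Tk T k ^^ n) v u) \<in> WC T k C" for n v
  proof (induction n)
    case 0
    then show ?case using W_zero by simp
  next
    case (Suc n)
    define x where "x = (TC T k C ^^ n) v"
    define y where "y = (Tk T k ^^ n) v"
    have "(\<lambda>u. (TC T k C ^^ Suc n) v u - (Tk T k ^^ Suc n) v u)
       = (\<lambda>u. Tk T k (\<lambda>u. x u - y u) u + (-1) * (\<Sum>w\<in>C. Ew w x u))"
      by (simp add: x_def y_def TC_def Tk_diff algebra_simps)
    also have "\<dots> \<in> WC T k C"
      by (rule W_add[OF W_Tk[OF Suc[folded x_def y_def]] W_smult[OF W_E[OF finC]]])
    finally show ?case .
  qed
  have K: "(Tk T k ^^ k) v \<in> WC T k C" for v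
  proof -
    have q: "Qm T k 0 ((Tk T k ^^ k) v)" using Qm_pow[OF assms(1), of k] by simp
    obtain k' where k': "k = Suc k'" using assms(1) by (cases k) auto
    have "(Tk T k ^^ k) v \<in> Vsp T k" using Tk_Vsp[OF assms(1)] k' by simp
    then obtain g where "g \<in> Vsp T 1" "(Tk T k ^^ k) v = psi T k g" using Q0_psi[OF q _ assms(1)] by blast
    thus ?thesis using W_psi[of g T k C] by simp
  qed
  have F: "(TC T k C ^^ k) v \<in> WC T k C" for v
  proof -
    have "(TC T k C ^^ k) v = (\<lambda>u. (\<lambda>u. (TC T k C ^^ k) v u - (Tk T k ^^ k) v u) u + (Tk T k ^^ k) v u)"
      by simp
    also have "\<dots> \<in> WC T k C" by (rule W_add[OF D K])
    finally show ?thesis .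
  qed
  show ?thesis
  proof (intro conjI)
    show "\<exists>N. \<forall>v\<in>Vsp T k. (TC T k C ^^ N) v \<in> WC T k C" using F by (intro exI[of _ k]) simp
  qed (rule P1)
qed

end
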